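(* For integers $r\ge 2$ and $n\ge r+1$, $$\mathrm{ex}_r(n,\Delta_{r+1}^r)\le \frac{(r-1)(n-r+1)+1}{r(n-r)}\binom{n}{r}.$$
   Context: An $r$-uniform hypergraph ($r$-graph) is a pair $(V,E)$ with $E$ a family of $r$-element subsets of $V$. $\Delta_{r+1}^r$ denotes the complete $r$-graph on $r+1$ vertices (all $r$-subsets of an $(r+1)$-set as edges). $\mathrm{ex}_r(n,\Delta_{r+1}^r)$ is the maximum number of edges in an $r$-graph on $n$ vertices containing no sub-hypergraph isomorphic to $\Delta_{r+1}^r$. *)

theory Defs
  imports Complex_Main
begin

definition r_graph :: "nat \<Rightarrow> 'a set \<Rightarrow> 'a set set \<Rightarrow> bool" where
  "r_graph r V E \<longleftrightarrow> (\<forall>e\<in>E. e \<subseteq> V \<and> card e = r \<and> finite e)"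

definition contains_clique :: "nat \<Rightarrow> 'a set \<Rightarrow> 'a set set \<Rightarrow> bool" where
  "contains_clique r V E \<longleftrightarrow>
     (\<exists>S. S \<subseteq> V \<and> finite S \<and> card S = r + 1 \<and> {e. e \<subseteq> S \<and> card e = r} \<subseteq> E)"

definition ex_clique :: "nat \<Rightarrow> nat \<Rightarrow> nat" where
  "ex_clique r n = Max {card E | E. r_graph r {0..<n} E \<and> \<not> contains_clique r {0..<n} E}"

end

theory Submission
  imports Defs
begin

lemma card_subsets_r1:
  assumes "finite e" "card e = r" "r \<ge> 1"
  shows "card {T. T \<subseteq> e \<and> card T = r - 1} = r"
  using n_subsets[OF assms(1), of "r-1"] assms by (cases r) auto

lemma no_full_link:
  assumes G: "r_graph r V E" and nc: "\<not> contains_clique r V E" and r: "r \<ge> 1"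
    and e: "e \<in> E" and v: "v \<in> V - e" and fV: "finite V"
  shows "card {T. T \<subseteq> e \<and> card T = r - 1 \<and> insert v T \<in> E} \<le> r - 1"
proof (rule ccontr)
  let ?Te = "{T. T \<subseteq> e \<and> card T = r - 1}"
  let ?A = "{T. T \<subseteq> e \<and> card T = r - 1 \<and> insert v T \<in> E}"
  assume nt: "\<not> ?thesis"
  have fe: "finite e" "card e = r" "e \<subseteq> V" using G e unfolding r_graph_def by auto
  have cT: "card ?Te = r" using card_subsets_r1 fe r by auto
  have fT: "finite ?Te" using fe by auto
  have sub: "?A \<subseteq> ?Te" by auto
  have "card ?A \<ge> card ?Te" using nt cT by auto
  then have eq: "?A = ?Te" using card_subset_eq[OF fT sub] card_mono[OF fT sub] by auto
  have all: "\<And>T. T \<subseteq> e \<Longrightarrow> card T = r - 1 \<Longrightarrow> insert v T \<in> E"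
  proof -
    fix T assume "T \<subseteq> e" "card T = r - 1"
    then have "T \<in> ?A" using eq by blast
    then show "insert v T \<in> E" by blast
  qed
  let ?S = "insert v e"
  have "v \<notin> e" using v by auto
  have Sprops: "?S \<subseteq> V" "finite ?S" "card ?S = r + 1" using fe v \<open>v \<notin> e\<close> by auto
  have "{f. f \<subseteq> ?S \<and> card f = r} \<subseteq> E"
  proof
    fix f assume "f \<in> {f. f \<subseteq> ?S \<and> card f = r}"
    then have f: "f \<subseteq> ?S" "card f = r" by auto
    have ff: "finite f" using f Sprops finite_subset by blast
    show "f \<in> E"
    proof (cases "v \<in> f")
      case True
      have "f - {v} \<subseteq> e" using f by auto
      moreover have "card (f - {v}) = r - 1" using True f ff by simp
      ultimately have "insert v (f - {v}) \<in> E" using all by blast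
      then show ?thesis using True by (simp add: insert_absorb)
    next
      case False
      then have "f \<subseteq> e" using f by auto
      then have "f = e" using card_subset_eq[OF fe(1)] f fe by auto
      then show ?thesis using e by simp
    qed
  qed
  then have "contains_clique r V E" unfolding contains_clique_def using Sprops by blast
  then show False using nc by simp
qed

lemma deg_formula:
  assumes G: "r_graph r V E" and r: "r \<ge> 1" and e: "e \<in> E"
    and T: "T \<subseteq> e" "card T = r - 1" and fV: "finite V"
  shows "card {f\<in>E. T \<subseteq> f} = 1 + card {v\<in>V - e. insert v T \<in> E}"
proof -
  have fe: "finite e" "card e = r" "e \<subseteq> V" using G e unfolding r_graph_def by auto
  let ?B = "{v\<in>V - e. insert v T \<in> E}"
  have eqs: "{f\<in>E. T \<subseteq> f} = insert e ((\<lambda>v. insert v T) ` ?B)"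
  proof (intro equalityI subsetI)
    fix f assume "f \<in> {f\<in>E. T \<subseteq> f}"
    then have f: "f \<in> E" "T \<subseteq> f" by auto
    have ff: "finite f" "card f = r" "f \<subseteq> V" using G f unfolding r_graph_def by auto
    show "f \<in> insert e ((\<lambda>v. insert v T) ` ?B)"
    proof (cases "f = e")
      case True then show ?thesis by simp
    next
      case False
      have fT: "finite T" using T fe finite_subset by blast
      have "card (f - T) = 1" using card_Diff_subset[OF fT f(2)] ff T r by simp
      then obtain v where fv: "f - T = {v}" using card_1_singletonE by blast
      then have feq: "f = insert v T" using f(2) by auto
      have vT: "v \<notin> T" using fv by auto
      have "v \<notin> e"
      proof
        assume "v \<in> e"
        then have "f \<subseteq> e" using feq T by auto
        then have "f = e" using card_subset_eq[OF fe(1)] ff fe by auto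
        then show False using False by simp
      qed
      moreover have "v \<in> V" using feq ff by auto
      ultimately have "v \<in> ?B" using feq f by auto
      then show ?thesis using feq by blast
    qed
  next
    fix f assume "f \<in> insert e ((\<lambda>v. insert v T) ` ?B)"
    then show "f \<in> {f\<in>E. T \<subseteq> f}" using e T by auto
  qed
  have enot: "e \<notin> (\<lambda>v. insert v T) ` ?B" by auto
  have inj: "inj_on (\<lambda>v. insert v T) ?B"
  proof (rule inj_onI)
    fix x y assume "x \<in> ?B" "y \<in> ?B" "insert x T = insert y T"
    then show "x = y" using T by blast
  qed
  have fB: "finite ?B" using fV by auto
  show ?thesis unfolding eqs using enot card_image[OF inj] fB by simp
qed


lemma local_sum:
  assumes G: "r_graph r V E" and nc: "\<not> contains_clique r V E" and r: "r \<ge> 1"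
    and e: "e \<in> E" and fV: "finite V"
  shows "(\<Sum>T\<in>{T. T \<subseteq> e \<and> card T = r - 1}. card {f\<in>E. T \<subseteq> f}) \<le> r + (card V - r) * (r - 1)"
proof -
  let ?Te = "{T. T \<subseteq> e \<and> card T = r - 1}"
  have fe: "finite e" "card e = r" "e \<subseteq> V" using G e unfolding r_graph_def by auto
  have fT: "finite ?Te" using fe by auto
  have "(\<Sum>T\<in>?Te. card {f\<in>E. T \<subseteq> f}) = (\<Sum>T\<in>?Te. 1 + card {v\<in>V - e. insert v T \<in> E})"
    using deg_formula[OF G r e _ _ fV] by (intro sum.cong) auto
  also have "\<dots> = r + (\<Sum>T\<in>?Te. card {v\<in>V - e. insert v T \<in> E})"
    using card_subsets_r1[OF fe(1,2) r] by (subst sum.distrib) simp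
  also have "(\<Sum>T\<in>?Te. card {v\<in>V - e. insert v T \<in> E}) = (\<Sum>T\<in>?Te. \<Sum>v\<in>V - e. if insert v T \<in> E then 1 else 0)"
    using fV by (intro sum.cong refl) (simp add: sum.If_cases Int_def)
  also have "(\<Sum>T\<in>?Te. \<Sum>v\<in>V - e. if insert v T \<in> E then 1 else 0) = (\<Sum>v\<in>V - e. \<Sum>T\<in>?Te. if insert v T \<in> E then 1 else 0)"
    by (rule sum.swap)
  also have "\<dots> = (\<Sum>v\<in>V - e. card {T. T \<subseteq> e \<and> card T = r - 1 \<and> insert v T \<in> E})"
    using fT by (intro sum.cong) (auto simp: sum.If_cases Int_def conj_assoc)
  also have "\<dots> \<le> (\<Sum>v\<in>V - e. r - 1)"
    by (intro sum_mono no_full_link[OF G nc r e _ fV])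
  also have "\<dots> = (card V - r) * (r - 1)" using fe fV by (simp add: card_Diff_subset)
  finally show ?thesis by simp
qed

lemma sum_deg:
  assumes G: "r_graph r V E" and r: "r \<ge> 1" and fV: "finite V"
  shows "(\<Sum>T\<in>{T. T \<subseteq> V \<and> card T = r - 1}. card {f\<in>E. T \<subseteq> f}) = r * card E"
proof -
  let ?Ts = "{T. T \<subseteq> V \<and> card T = r - 1}"
  have fE: "finite E" using G fV unfolding r_graph_def
    by (meson Pow_iff finite_Pow_iff finite_subset subsetI)
  have fTs: "finite ?Ts" using fV by auto
  have "(\<Sum>T\<in>?Ts. card {f\<in>E. T \<subseteq> f}) = (\<Sum>T\<in>?Ts. \<Sum>f\<in>E. if T \<subseteq> f then 1 else 0)"
    using fE by (intro sum.cong) (auto simp: sum.If_cases Int_def)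
  also have "\<dots> = (\<Sum>f\<in>E. \<Sum>T\<in>?Ts. if T \<subseteq> f then 1 else 0)" by (rule sum.swap)
  also have "\<dots> = (\<Sum>f\<in>E. r)"
  proof (intro sum.cong refl)
    fix f assume f: "f \<in> E"
    have ff: "finite f" "card f = r" "f \<subseteq> V" using G f unfolding r_graph_def by auto
    have "{T \<in> ?Ts. T \<subseteq> f} = {T. T \<subseteq> f \<and> card T = r - 1}" using ff by auto
    then show "(\<Sum>T\<in>?Ts. if T \<subseteq> f then 1 else 0) = r"
      using fTs card_subsets_r1[OF ff(1,2) r] by (simp add: sum.If_cases Int_def)
  qed
  finally show ?thesis by simp
qed

lemma sum_deg_sq:
  assumes G: "r_graph r V E" and r: "r \<ge> 1" and fV: "finite V"
  shows "(\<Sum>T\<in>{T. T \<subseteq> V \<and> card T = r - 1}. (card {f\<in>E. T \<subseteq> f})^2)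
     = (\<Sum>e\<in>E. \<Sum>T\<in>{T. T \<subseteq> e \<and> card T = r - 1}. card {f\<in>E. T \<subseteq> f})"
proof -
  let ?Ts = "{T. T \<subseteq> V \<and> card T = r - 1}"
  let ?d = "\<lambda>T. card {f\<in>E. T \<subseteq> f}"
  have fE: "finite E" using G fV unfolding r_graph_def
    by (meson Pow_iff finite_Pow_iff finite_subset subsetI)
  have fTs: "finite ?Ts" using fV by auto
  have "(\<Sum>T\<in>?Ts. (?d T)^2) = (\<Sum>T\<in>?Ts. \<Sum>f\<in>E. if T \<subseteq> f then ?d T else 0)"
  proof (intro sum.cong refl)
    fix T assume "T \<in> ?Ts"
    have "(\<Sum>f\<in>E. if T \<subseteq> f then ?d T else 0) = ?d T * ?d T"
      using fE by (simp add: sum.If_cases Int_def)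
    then show "(?d T)^2 = (\<Sum>f\<in>E. if T \<subseteq> f then ?d T else 0)" by (simp add: power2_eq_square)
  qed
  also have "\<dots> = (\<Sum>f\<in>E. \<Sum>T\<in>?Ts. if T \<subseteq> f then ?d T else 0)" by (rule sum.swap)
  also have "\<dots> = (\<Sum>e\<in>E. \<Sum>T\<in>{T. T \<subseteq> e \<and> card T = r - 1}. ?d T)"
  proof (rule sum.cong[OF refl])
    fix f assume f: "f \<in> E"
    have ff: "finite f" "card f = r" "f \<subseteq> V" using G f unfolding r_graph_def by auto
    have "{T \<in> ?Ts. T \<subseteq> f} = {T. T \<subseteq> f \<and> card T = r - 1}" using ff by auto
    then show "(\<Sum>T\<in>?Ts. if T \<subseteq> f then ?d T else 0) = (\<Sum>T\<in>{T. T \<subseteq> f \<and> card T = r - 1}. ?d T)"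
      using fTs by (simp add: sum.If_cases Int_def)
  qed
  finally show ?thesis .
qed


lemma cs: fixes x :: "'b \<Rightarrow> real" assumes "finite A"
  shows "(\<Sum>a\<in>A. x a)^2 \<le> real (card A) * (\<Sum>a\<in>A. (x a)^2)"
proof (cases "card A = 0")
  case True then show ?thesis using assms by simp
next
  case False
  define N where "N = real (card A)"
  define s where "s = (\<Sum>a\<in>A. x a)"
  have Np: "N > 0" using False N_def by simp
  have "0 \<le> (\<Sum>a\<in>A. (N * x a - s)^2)" by (simp add: sum_nonneg)
  also have "\<dots> = (\<Sum>a\<in>A. N^2 * (x a)^2 - (2*N*s) * x a + s^2)"
    by (simp add: power2_eq_square algebra_simps)
  also have "\<dots> = N^2 * (\<Sum>a\<in>A. (x a)^2) - (2*N*s) * s + N * s^2"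
    by (simp add: sum.distrib sum_subtractf sum_distrib_left[symmetric] s_def N_def)
  finally have "0 \<le> N * (N * (\<Sum>a\<in>A. (x a)^2) - s^2)" by (simp add: power2_eq_square algebra_simps)
  then show ?thesis using Np unfolding s_def N_def
    by (simp add: zero_le_mult_iff)
qed

lemma key:
  assumes G: "r_graph r V E" and nc: "\<not> contains_clique r V E" and r: "r \<ge> 1" and fV: "finite V"
  shows "r^2 * card E \<le> (card V choose (r - 1)) * (r + (card V - r) * (r - 1))"
proof -
  let ?Ts = "{T. T \<subseteq> V \<and> card T = r - 1}"
  let ?d = "\<lambda>T. card {f\<in>E. T \<subseteq> f}"
  define B where "B = r + (card V - r) * (r - 1)"
  define C where "C = card V choose (r - 1)"
  have fTs: "finite ?Ts" using fV by auto
  have cTs: "card ?Ts = C" unfolding C_def using n_subsets[OF fV] by simp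
  have S1: "(\<Sum>T\<in>?Ts. ?d T) = r * card E" by (rule sum_deg[OF G r fV])
  have "(\<Sum>T\<in>?Ts. (?d T)^2) \<le> (\<Sum>e\<in>E. B)"
    unfolding sum_deg_sq[OF G r fV] B_def
    by (intro sum_mono local_sum[OF G nc r _ fV])
  then have S2: "(\<Sum>T\<in>?Ts. (?d T)^2) \<le> card E * B" by simp
  have S2': "real (\<Sum>T\<in>?Ts. (?d T)^2) \<le> real (card E * B)" using S2 by (simp only: of_nat_le_iff)
  have "real ((\<Sum>T\<in>?Ts. ?d T)^2) \<le> real (card ?Ts) * (\<Sum>T\<in>?Ts. (real (?d T))^2)"
    using cs[OF fTs, of "\<lambda>T. real (?d T)"] by simp
  also have "\<dots> = real C * real (\<Sum>T\<in>?Ts. (?d T)^2)" using cTs by simp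
  also have "\<dots> \<le> real C * real (card E * B)" using mult_left_mono[OF S2'] by simp
  finally have "(r * card E)^2 \<le> C * (card E * B)" unfolding S1 by (simp only: of_nat_le_iff of_nat_mult[symmetric])
  then have "card E * (r^2 * card E) \<le> card E * (C * B)" by (simp add: power2_eq_square algebra_simps)
  then have "card E = 0 \<or> r^2 * card E \<le> C * B" by auto
  then show ?thesis unfolding B_def C_def by auto
qed

theorem mainTheorem7:
  fixes r n :: nat
  assumes "r \<ge> 2" and "n \<ge> r + 1"
  shows "real (ex_clique r n)
           \<le> ((real r - 1) * (real n - real r + 1) + 1) / (real r * (real n - real r))
              * real (n choose r)"
proof -
  let ?V = "{0..<n}"
  let ?M = "{card E | E. r_graph r ?V E \<and> \<not> contains_clique r ?V E}"
  have fin: "finite ?M"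
  proof -
    have "?M \<subseteq> card ` Pow (Pow ?V)" unfolding r_graph_def by auto
    then show ?thesis by (rule finite_subset) auto
  qed
  have ne: "?M \<noteq> {}"
  proof -
    have "r_graph r ?V ({} :: nat set set)" unfolding r_graph_def by auto
    moreover have "\<not> contains_clique r ?V {}"
    proof
      assume "contains_clique r ?V ({} :: nat set set)"
      then obtain S :: "nat set" where S: "finite S" "card S = r + 1" "{e. e \<subseteq> S \<and> card e = r} \<subseteq> {}"
        unfolding contains_clique_def by blast
      have "r \<le> card S" using S(2) by simp
      then obtain e where "e \<subseteq> S" "card e = r" by (rule obtain_subset_with_card_n)
      then show False using S(3) by blast
    qed
    ultimately show ?thesis by blast
  qed
  obtain E where E: "r_graph r ?V E" "\<not> contains_clique r ?V E" "ex_clique r n = card E"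
    using Max_in[OF fin ne] unfolding ex_clique_def by auto
  have r1: "r \<ge> 1" using assms by simp
  have k: "r^2 * card E \<le> (n choose (r - 1)) * (r + (n - r) * (r - 1))"
    using key[OF E(1,2) r1] by simp
  have id: "(n - (r - 1)) * (n choose (r - 1)) = r * (n choose r)"
    using binomial_absorb_comp[of n "r-1"] binomial_absorption[of "r-1" n] r1 by simp
  have "r * (r * card E * (n - (r - 1))) \<le> r * ((n choose r) * (r + (n - r) * (r - 1)))"
  proof -
    have "r * (r * card E * (n - (r - 1))) = (r^2 * card E) * (n - (r - 1))"
      by (simp add: power2_eq_square algebra_simps)
    also have "\<dots> \<le> (n choose (r - 1)) * (r + (n - r) * (r - 1)) * (n - (r - 1))"
      using k by (rule mult_right_mono) simp
    also have "\<dots> = r * ((n choose r) * (r + (n - r) * (r - 1)))"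
      using id by (metis mult.assoc mult.commute)
    finally show ?thesis .
  qed
  then have k2: "r * card E * (n - (r - 1)) \<le> (n choose r) * (r + (n - r) * (r - 1))"
    using r1 by simp
  have k3: "real r * real (card E) * (real n - real r + 1) \<le> real (n choose r) * (real r + (real n - real r) * (real r - 1))"
  proof -
    have "real (r * card E * (n - (r - 1))) \<le> real ((n choose r) * (r + (n - r) * (r - 1)))"
      using k2 by (simp only: of_nat_le_iff)
    then have "real r * real (card E) * (1 + real n - real r) \<le> real (n choose r) * (real r + (real n - real r) * (real r - 1))"
      using assms by (simp add: of_nat_diff)
    then show ?thesis by (simp add: algebra_simps)
  qed
  have pos: "real r * (real n - real r) > 0" using assms by simp
  have "real r * (real n - real r) * real (card E) \<le> real r * real (card E) * (real n - real r + 1)"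
    by (simp add: algebra_simps)
  also note k3
  also have "real (n choose r) * (real r + (real n - real r) * (real r - 1)) =
     ((real r - 1) * (real n - real r + 1) + 1) * real (n choose r)" by (simp add: algebra_simps)
  finally have "real r * (real n - real r) * real (card E) \<le> ((real r - 1) * (real n - real r + 1) + 1) * real (n choose r)" .
  then have "real (card E) \<le> ((real r - 1) * (real n - real r + 1) + 1) * real (n choose r) / (real r * (real n - real r))"
    using pos by (simp add: pos_le_divide_eq mult.commute)
  then show ?thesis using E(3) by simp
qed
end
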